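(* Let $K=2$ and suppose that for every horizon $T$ (a multiple of $100$) a valid pair $(\eta,\gamma)=(\eta_T,\gamma_T)$ in the non-trivial regime is chosen. Then there exists $T_0$ such that for all $T\ge T_0$, WSU-UX run on the two-phase loss sequence satisfies $$\mathbb{E}\Bigl[\sum_{t=1}^T\Bigl(\hat\ell_{t,1}-\sum_{j\in\{1,2\}}\pi_{t,j}\hat\ell_{t,j}\Bigr)^2\Bigr]\ge \frac{1}{1600}\,\frac{TK}{\gamma}.$$
   Context: WSU-UX. Fix integers $K\ge 2$ and $T\ge 1$ and hyperparameters $\eta,\gamma$. The pair $(\eta,\gamma)$ is called valid if $\eta,\gamma\in(0,1/2)$ and $\eta K/\gamma\le 1/2$. Given a fixed loss sequence $\ell_t\in[0,1]^K$, WSU-UX sets $\pi_{1,i}=1/K$ and in each round $t$: forms $\tilde\pi_{t,i}=(1-\gamma)\pi_{t,i}+\gamma/K$; draws $I_t$ with $\Pr(I_t=i\mid\mathcal F_{t-1})=\tilde\pi_{t,i}$; sets $\hat\ell_{t,i}=\ell_{t,i}\mathbf 1[I_t=i]/\tilde\pi_{t,i}$; and updates $\pi_{t+1,i}=\pi_{t,i}\bigl(1-\eta(\hat\ell_{t,i}-\sum_{j}\pi_{t,j}\hat\ell_{t,j})\bigr)$; $\mathcal F_t$ is the history generated by $I_1,\dots,I_t$. Non-trivial regime: $\eta\ge T^{-2/3}$ and $\gamma\le T^{-1/3}$. Two-phase loss sequence ($K=2$, $T$ a multiple of $100$, $T_1=T/100$): $\ell_{t,1}=1,\ell_{t,2}=0$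 for $1\le t\le T_1$ and $\ell_{t,1}=0,\ell_{t,2}=1$ for $T_1<t\le T$. *)

theory Defs
  imports Complex_Main
begin

text \<open>WSU-UX with K arms indexed 1..K. Loss sequence l t i (round t >= 1, arm i).
  Weights p :: nat => real.\<close>

definition valid_pair :: "nat \<Rightarrow> real \<Rightarrow> real \<Rightarrow> bool" where
  "valid_pair K \<eta> \<gamma> \<longleftrightarrow> 0 < \<eta> \<and> \<eta> < 1/2 \<and> 0 < \<gamma> \<and> \<gamma> < 1/2 \<and> \<eta> * real K / \<gamma> \<le> 1/2"

definition nontrivial_regime :: "nat \<Rightarrow> real \<Rightarrow> real \<Rightarrow> bool" where
  "nontrivial_regime T \<eta> \<gamma> \<longleftrightarrow> \<eta> \<ge> real T powr (-2/3) \<and> \<gamma> \<le> real T powr (-1/3)"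

definition pi_tilde :: "nat \<Rightarrow> real \<Rightarrow> (nat \<Rightarrow> real) \<Rightarrow> nat \<Rightarrow> real" where
  "pi_tilde K \<gamma> p i = (1 - \<gamma>) * p i + \<gamma> / real K"

definition lhat :: "nat \<Rightarrow> real \<Rightarrow> (nat \<Rightarrow> nat \<Rightarrow> real) \<Rightarrow> (nat \<Rightarrow> real) \<Rightarrow> nat \<Rightarrow> nat \<Rightarrow> nat \<Rightarrow> real" where
  "lhat K \<gamma> l p t I i = (if I = i then l t i / pi_tilde K \<gamma> p i else 0)"

definition wsu_update :: "nat \<Rightarrow> real \<Rightarrow> real \<Rightarrow> (nat \<Rightarrow> nat \<Rightarrow> real) \<Rightarrow> (nat \<Rightarrow> real) \<Rightarrow> nat \<Rightarrow> nat \<Rightarrow> nat \<Rightarrow> real" where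
  "wsu_update K \<eta> \<gamma> l p t I = (\<lambda>i. p i * (1 - \<eta> * (lhat K \<gamma> l p t I i
       - (\<Sum>j\<in>{1..K}. p j * lhat K \<gamma> l p t I j))))"

text \<open>wsu_E K eta gamma l n t p: expected value of
  sum over rounds t..t+n-1 of (lhat_{s,1} - sum_j pi_{s,j} lhat_{s,j})^2,
  starting in round t with weights p, where I_s is drawn from pi_tilde.\<close>
primrec wsu_E :: "nat \<Rightarrow> real \<Rightarrow> real \<Rightarrow> (nat \<Rightarrow> nat \<Rightarrow> real) \<Rightarrow> nat \<Rightarrow> nat \<Rightarrow> (nat \<Rightarrow> real) \<Rightarrow> real" where
  "wsu_E K \<eta> \<gamma> l 0 t p = 0"
| "wsu_E K \<eta> \<gamma> l (Suc n) t p =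
     (\<Sum>I\<in>{1..K}. pi_tilde K \<gamma> p I *
        ((lhat K \<gamma> l p t I 1 - (\<Sum>j\<in>{1..K}. p j * lhat K \<gamma> l p t I j))\<^sup>2
         + wsu_E K \<eta> \<gamma> l n (Suc t) (wsu_update K \<eta> \<gamma> l p t I)))"

definition wsu_expected_sq :: "nat \<Rightarrow> real \<Rightarrow> real \<Rightarrow> (nat \<Rightarrow> nat \<Rightarrow> real) \<Rightarrow> nat \<Rightarrow> real" where
  "wsu_expected_sq K \<eta> \<gamma> l T = wsu_E K \<eta> \<gamma> l T 1 (\<lambda>i. 1 / real K)"

definition two_phase :: "nat \<Rightarrow> nat \<Rightarrow> nat \<Rightarrow> real" where
  "two_phase T t i = (if t \<le> T div 100 then (if i = 1 then 1 else 0) else (if i = 1 then 0 else 1))"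

end

theory Submission
  imports Defs "HOL-Real_Asymp.Real_Asymp"
begin

lemma sum12: "(\<Sum>i\<in>{1..2::nat}. f i) = f 1 + f 2"
  by (simp add: numeral_2_eq_2)

lemma main:
  fixes \<eta> \<gamma> :: real and T :: nat and w :: "nat \<Rightarrow> real"
  assumes vp: "valid_pair 2 \<eta> \<gamma>"
    and w0: "\<And>s. 0 \<le> w s" and w1: "\<And>s. w s \<le> 1"
    and wT: "\<And>s. s > T div 100 \<Longrightarrow> w s = 0"
  shows "p 1 \<ge> 0 \<Longrightarrow> p 2 \<ge> 0 \<Longrightarrow> p 1 + p 2 = 1 \<Longrightarrow> (t \<le> T div 100 \<longrightarrow> p 1 \<le> 1/2) \<Longrightarrow>
   wsu_E 2 \<eta> \<gamma> (two_phase T) n t p \<ge>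
     (\<Sum>k<n. w (t+k) * (3/(8*\<gamma>) - (1-\<eta>/2)^k * p 1 /(4*\<gamma>^2)))"
proof (induction n arbitrary: t p)
  case 0
  then show ?case by simp
next
  case (Suc n)
  have g0: "\<gamma> > 0" and g1: "\<gamma> < 1/2" and e0: "\<eta> > 0" and eg: "\<eta> \<le> \<gamma>/4"
    using vp by (auto simp: valid_pair_def field_simps)
  define q where "q = (1-\<gamma>)*p 1 + \<gamma>/2"
  define r where "r = (1-\<gamma>)*p 2 + \<gamma>/2"
  have q0: "q \<ge> \<gamma>/2" using Suc.prems g1 by (simp add: q_def)
  have r0: "r \<ge> \<gamma>/2" using Suc.prems g1 by (simp add: r_def)
  have qr0: "q + r = (1-\<gamma>)*(p 1 + p 2) + \<gamma>" by (simp add: q_def r_def algebra_simps)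
  have qr: "q + r = 1" unfolding qr0 using Suc.prems(3) by simp
  have ps2: "p 2 = 1 - p 1" and ps1: "p 1 = 1 - p 2" using Suc.prems(3) by linarith+
  have pt1: "pi_tilde 2 \<gamma> p 1 = q" and pt2: "pi_tilde 2 \<gamma> p 2 = r"
    by (simp_all add: pi_tilde_def q_def r_def)
  define A where "A = (\<Sum>k<n. w (Suc t+k) * (3/(8*\<gamma>)))"
  define B where "B = (\<Sum>k<n. w (Suc t+k) * ((1-\<eta>/2)^k /(4*\<gamma>^2)))"
  have rho0: "0 \<le> 1 - \<eta>/2" using e0 eg g1 by linarith
  have B0: "B \<ge> 0" unfolding B_def using w0 rho0 g0
    by (intro sum_nonneg mult_nonneg_nonneg divide_nonneg_nonneg zero_le_power) auto
  have Lf: "(\<Sum>k<n. w (Suc t+k) * (3/(8*\<gamma>) - (1-\<eta>/2)^k * x /(4*\<gamma>^2))) = A - B * x" for x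
  proof -
    have "A - B*x = (\<Sum>k<n. w (Suc t+k) * (3/(8*\<gamma>)) - w (Suc t+k) * ((1-\<eta>/2)^k /(4*\<gamma>^2)) * x)"
      unfolding A_def B_def by (simp add: sum_subtractf sum_distrib_right)
    also have "\<dots> = (\<Sum>k<n. w (Suc t+k) * (3/(8*\<gamma>) - (1-\<eta>/2)^k * x /(4*\<gamma>^2)))"
      by (rule sum.cong) (simp_all add: algebra_simps)
    finally show ?thesis by simp
  qed
  have rhs: "(\<Sum>k<Suc n. w (t+k) * (3/(8*\<gamma>) - (1-\<eta>/2)^k * p 1 /(4*\<gamma>^2)))
      = w t * (3/(8*\<gamma>) - p 1 /(4*\<gamma>^2)) + (A - B * ((1-\<eta>/2) * p 1))"
  proof -
    have "(\<Sum>k<n. w (t + Suc k) * (3/(8*\<gamma>) - (1-\<eta>/2)^(Suc k) * p 1 /(4*\<gamma>^2)))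
        = (\<Sum>k<n. w (Suc t+k) * (3/(8*\<gamma>) - (1-\<eta>/2)^k * ((1-\<eta>/2) * p 1) /(4*\<gamma>^2)))"
      by (rule sum.cong) (simp_all add: algebra_simps)
    then show ?thesis unfolding Lf by (subst sum.lessThan_Suc_shift) simp
  qed
  show ?case
  proof (cases "t \<le> T div 100")
    case True
    have l1: "two_phase T t 1 = 1" "two_phase T t 2 = 0" using True by (simp_all add: two_phase_def)
    have lh: "lhat 2 \<gamma> (two_phase T) p t 1 1 = 1/q" "lhat 2 \<gamma> (two_phase T) p t 1 2 = 0"
       "lhat 2 \<gamma> (two_phase T) p t 2 1 = 0" "lhat 2 \<gamma> (two_phase T) p t 2 2 = 0"
      using l1 pt1 by (simp_all add: lhat_def)
    define p' where "p' = wsu_update 2 \<eta> \<gamma> (two_phase T) p t 1"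
    have p'1: "p' 1 = p 1 * (1 - \<eta> * p 2 / q)"
      unfolding p'_def wsu_update_def sum12 lh
      using q0 g0 by (simp add: field_simps ps2)
    have p'2: "p' 2 = p 2 * (1 + \<eta> * p 1 / q)"
      unfolding p'_def wsu_update_def sum12 lh by (simp add: field_simps)
    have upd2: "wsu_update 2 \<eta> \<gamma> (two_phase T) p t 2 = p"
    proof
      fix i show "wsu_update 2 \<eta> \<gamma> (two_phase T) p t 2 i = p i"
        unfolding wsu_update_def sum12 lh
        by (cases "i = 2") (use l1 in \<open>simp_all add: lhat_def\<close>)
    qed
    have E: "wsu_E 2 \<eta> \<gamma> (two_phase T) (Suc n) t p
       = q * ((1/q - p 1 * (1/q))\<^sup>2 + wsu_E 2 \<eta> \<gamma> (two_phase T) n (Suc t) p')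
         + r * ((0 - 0)\<^sup>2 + wsu_E 2 \<eta> \<gamma> (two_phase T) n (Suc t) p)"
      unfolding wsu_E.simps(2) sum12 pt1 pt2 lh upd2 p'_def[symmetric] by simp
    have eq1: "\<eta> * p 2 / q \<le> 1"
    proof -
      have "\<eta> * p 2 \<le> \<eta>" using Suc.prems e0 by (simp add: mult_left_le)
      also have "\<dots> \<le> q" using eg q0 g0 by linarith
      finally show ?thesis using q0 g0 by simp
    qed
    have p'10: "p' 1 \<ge> 0" unfolding p'1 using Suc.prems eq1 by simp
    have p'20: "p' 2 \<ge> 0" unfolding p'2 using Suc.prems e0 q0 g0 by simp
    have p'sum: "p' 1 + p' 2 = 1" unfolding p'1 p'2 using q0 g0
      by (simp add: field_simps ps2)
    have p'le: "p' 1 \<le> 1/2" unfolding p'1 using Suc.prems True eq1 e0 q0 g0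
      by (smt (verit) divide_nonneg_nonneg mult_left_le mult_nonneg_nonneg)
    have IH1: "wsu_E 2 \<eta> \<gamma> (two_phase T) n (Suc t) p' \<ge> A - B * p' 1"
      using Suc.IH[of p' "Suc t"] p'10 p'20 p'sum p'le Lf by simp
    have IH2: "wsu_E 2 \<eta> \<gamma> (two_phase T) n (Suc t) p \<ge> A - B * p 1"
      using Suc.IH[of p "Suc t"] Suc.prems True Lf by simp
    have c: "(1/q - p 1 * (1/q))\<^sup>2 * q = p 2 ^ 2 / q"
      using q0 g0 by (simp add: field_simps power2_eq_square ps2)
    have cb: "p 2 ^ 2 / q \<ge> (3/(2*\<gamma>) - p 1/\<gamma>^2)/4"
    proof -
      define y where "y = p 1 + \<gamma>/2"
      have qy: "q \<le> y" using Suc.prems g0 by (simp add: q_def y_def algebra_simps)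
      have h: "p 2 \<ge> 1/2" using Suc.prems True by linarith
      have p2: "p 2 ^ 2 \<ge> 1/4" using power_mono[OF h, of 2] by (simp add: power2_eq_square)
      have "1/y \<ge> 3/(2*\<gamma>) - p 1/\<gamma>^2"
      proof -
        have y0: "y > 0" using Suc.prems g0 by (simp add: y_def)
        have "1/y - (2/\<gamma> - y/\<gamma>^2) = (y-\<gamma>)^2/(y*\<gamma>^2)"
          using y0 g0 by (simp add: field_simps power2_eq_square)
        moreover have "(y-\<gamma>)^2/(y*\<gamma>^2) \<ge> 0" using y0 by simp
        moreover have "2/\<gamma> - y/\<gamma>^2 = 3/(2*\<gamma>) - p 1/\<gamma>^2"
          using g0 by (simp add: y_def field_simps power2_eq_square)
        ultimately show ?thesis by linarith
      qed
      moreover have "1/q \<ge> 1/y" using qy q0 g0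
        by (intro divide_left_mono) auto
      moreover have "p 2 ^ 2 / q \<ge> (1/4) * (1/q)"
      proof -
        have "q > 0" using q0 g0 by linarith
        then have "(1/4) / q \<le> p 2 ^ 2 / q" using p2 by (intro divide_right_mono) auto
        then show ?thesis by simp
      qed
      ultimately have a: "3/(2*\<gamma>) - p 1/\<gamma>^2 \<le> 1/q" and b: "(1/4) * (1/q) \<le> p 2 ^ 2 / q" by linarith+
      have "(3/(2*\<gamma>) - p 1/\<gamma>^2)/4 \<le> (1/q)/4" using a by (rule divide_right_mono) simp
      also have "\<dots> = (1/4) * (1/q)" by simp
      finally show ?thesis using b by (rule order_trans)
    qed
    have cw: "w t * (3/(8*\<gamma>) - p 1 /(4*\<gamma>^2)) \<le> p 2 ^ 2 / q"
    proof -
      have eqv: "3/(8*\<gamma>) - p 1 /(4*\<gamma>^2) = (3/(2*\<gamma>) - p 1/\<gamma>^2)/4"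
        by (simp add: field_simps)
      have "p 2 ^ 2 / q \<ge> 0" using q0 g0 by simp
      then show ?thesis unfolding eqv using cb w0[of t] w1[of t]
        by (smt (verit) mult_left_le mult_nonneg_nonpos mult_le_cancel_right1 mult.commute)
    qed
    have lin: "q * (A - B * p' 1) + r * (A - B * p 1) \<ge> A - B * ((1-\<eta>/2) * p 1)"
    proof -
      have "q * (A - B * p' 1) + r * (A - B * p 1) = (q + r) * A - B * p 1 * (q + r) + B * p 1 * \<eta> * p 2"
        unfolding p'1 using q0 g0 by (simp add: field_simps)
      also have "\<dots> = A - B * (p 1 * (1 - \<eta> * p 2))" by (simp add: qr algebra_simps)
      also have "\<dots> \<ge> A - B * ((1-\<eta>/2) * p 1)"
      proof -
        have "p 1 * (1 - \<eta> * p 2) \<le> (1-\<eta>/2) * p 1"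
        proof -
          have h: "p 2 \<ge> 1/2" using Suc.prems True by linarith
          have "\<eta> * (1/2) \<le> \<eta> * p 2" using h e0 by (intro mult_left_mono) auto
          then have "1 - \<eta> * p 2 \<le> 1 - \<eta>/2" by simp
          then have "p 1 * (1 - \<eta> * p 2) \<le> p 1 * (1 - \<eta>/2)" using Suc.prems(1) by (rule mult_left_mono)
          then show ?thesis by (simp add: mult.commute)
        qed
        then show ?thesis using B0 by (smt (verit) mult_left_mono)
      qed
      finally show ?thesis .
    qed
    have "wsu_E 2 \<eta> \<gamma> (two_phase T) (Suc n) t p
       = p 2 ^ 2 / q + q * wsu_E 2 \<eta> \<gamma> (two_phase T) n (Suc t) p'
         + r * wsu_E 2 \<eta> \<gamma> (two_phase T) n (Suc t) p"
      unfolding E using c by (simp add: algebra_simps)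
    moreover have "q * wsu_E 2 \<eta> \<gamma> (two_phase T) n (Suc t) p' \<ge> q * (A - B * p' 1)"
      using IH1 q0 g0 by (simp add: mult_left_mono)
    moreover have "r * wsu_E 2 \<eta> \<gamma> (two_phase T) n (Suc t) p \<ge> r * (A - B * p 1)"
      using IH2 r0 g0 by (simp add: mult_left_mono)
    ultimately show ?thesis unfolding rhs using cw lin by linarith
  next
    case False
    have wz: "\<And>k. w (t + k) = 0" using wT False by simp
    have rhs0: "(\<Sum>k<Suc n. w (t+k) * (3/(8*\<gamma>) - (1-\<eta>/2)^k * p 1 /(4*\<gamma>^2))) = 0"
      by (simp add: wz)
    have wz': "\<And>k. w (Suc (t + k)) = 0" using wT False by simp
    have nn: "wsu_E 2 \<eta> \<gamma> (two_phase T) n (Suc t) p' \<ge> 0"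
      if "p' 1 \<ge> 0" "p' 2 \<ge> 0" "p' 1 + p' 2 = 1" for p'
      using Suc.IH[of p' "Suc t"] that False by (simp add: wz')
    have l1: "two_phase T t 1 = 0" "two_phase T t 2 = 1" using False by (simp_all add: two_phase_def)
    have lh: "lhat 2 \<gamma> (two_phase T) p t 2 2 = 1/r" "lhat 2 \<gamma> (two_phase T) p t 2 1 = 0"
       "lhat 2 \<gamma> (two_phase T) p t 1 1 = 0" "lhat 2 \<gamma> (two_phase T) p t 1 2 = 0"
      using l1 pt2 by (simp_all add: lhat_def)
    define p' where "p' = wsu_update 2 \<eta> \<gamma> (two_phase T) p t 2"
    have p'1: "p' 1 = p 1 * (1 + \<eta> * p 2 / r)"
      unfolding p'_def wsu_update_def sum12 lh using r0 g0 by (simp add: field_simps)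
    have p'2: "p' 2 = p 2 * (1 - \<eta> * p 1 / r)"
      unfolding p'_def wsu_update_def sum12 lh
      using r0 g0 by (simp add: field_simps ps2)
    have upd1: "wsu_update 2 \<eta> \<gamma> (two_phase T) p t 1 = p"
    proof
      fix i show "wsu_update 2 \<eta> \<gamma> (two_phase T) p t 1 i = p i"
        unfolding wsu_update_def sum12 lh
        by (cases "i = 1") (use l1 in \<open>simp_all add: lhat_def\<close>)
    qed
    have eq1: "\<eta> * p 1 / r \<le> 1"
    proof -
      have "\<eta> * p 1 \<le> \<eta>" using Suc.prems e0 by (simp add: mult_left_le)
      also have "\<dots> \<le> r" using eg r0 g0 by linarith
      finally show ?thesis using r0 g0 by simp
    qed
    have p'10: "p' 1 \<ge> 0" unfolding p'1 using Suc.prems e0 r0 g0 by simp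
    have p'20: "p' 2 \<ge> 0" unfolding p'2 using Suc.prems eq1 by simp
    have p'sum: "p' 1 + p' 2 = 1" unfolding p'1 p'2 using r0 g0
      by (simp add: field_simps ps2)
    have E: "wsu_E 2 \<eta> \<gamma> (two_phase T) (Suc n) t p
       = q * ((0 - 0)\<^sup>2 + wsu_E 2 \<eta> \<gamma> (two_phase T) n (Suc t) p)
         + r * ((0 - p 2 * (1/r))\<^sup>2 + wsu_E 2 \<eta> \<gamma> (two_phase T) n (Suc t) p')"
      unfolding wsu_E.simps(2) sum12 pt1 pt2 lh upd1 p'_def[symmetric] by simp
    have "wsu_E 2 \<eta> \<gamma> (two_phase T) (Suc n) t p \<ge> 0"
      unfolding E using nn[of p] nn[of p'] Suc.prems p'10 p'20 p'sum q0 r0 g0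
      by (intro add_nonneg_nonneg mult_nonneg_nonneg) auto
    then show ?thesis unfolding rhs0 .
  qed
qed

lemma asy: "eventually (\<lambda>x::real. exp (-(x powr (-2/3)) * (x/200 - 1) / 2) \<le> 4 * x powr (-2/3)) at_top"
  by real_asymp

theorem claim2:
  fixes \<eta> \<gamma> :: "nat \<Rightarrow> real"
  assumes "\<And>T. T \<ge> 1 \<Longrightarrow> 100 dvd T \<Longrightarrow>
             valid_pair 2 (\<eta> T) (\<gamma> T) \<and> nontrivial_regime T (\<eta> T) (\<gamma> T)"
  shows "\<exists>T0. \<forall>T\<ge>T0. 100 dvd T \<longrightarrow>
           wsu_expected_sq 2 (\<eta> T) (\<gamma> T) (two_phase T) T
             \<ge> (1/1600) * (real T * 2 / \<gamma> T)"
proof -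
  obtain X0 :: real where X0: "\<And>x::real. x \<ge> X0 \<Longrightarrow> exp (-(x powr (-2/3)) * (x/200 - 1) / 2) \<le> 4 * x powr (-2/3)"
    using asy unfolding eventually_at_top_linorder by blast
  show ?thesis
  proof (intro exI allI impI)
    fix T :: nat
    assume TT: "max 1 (nat \<lceil>X0\<rceil>) \<le> T" and dv: "100 dvd T"
    have T1: "T \<ge> 1" using TT by simp
    have TX: "real T \<ge> X0" using TT by linarith
    define e where "e = \<eta> T"
    define g where "g = \<gamma> T"
    have vp: "valid_pair 2 e g" and nt: "nontrivial_regime T e g"
      using assms[OF T1 dv] by (auto simp: e_def g_def)
    have g0: "g > 0" and g1: "g < 1/2" and e0: "e > 0" and eg: "e \<le> g/4"
      using vp by (auto simp: valid_pair_def field_simps)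
    have eT: "e \<ge> real T powr (-2/3)" using nt by (simp add: nontrivial_regime_def)
    obtain c where c: "T = 100 * c" using dv by blast
    define T1' where "T1' = T div 100"
    define m where "m = T div 200"
    have T1c: "T1' = c" by (simp add: T1'_def c)
    have mc: "m = c div 2" unfolding m_def c by simp
    have mT: "real m \<ge> real T / 200 - 1" unfolding mc c by linarith
    have cnt: "real (T1' - m) \<ge> real T / 200" unfolding T1c mc c by linarith
    have mle: "m \<le> T1'" unfolding T1c mc by simp
    have T1le: "T1' \<le> T" unfolding T1c c by simp
    define \<rho> where "\<rho> = 1 - e/2"
    have rho0: "0 \<le> \<rho>" and rho1: "\<rho> \<le> 1" using e0 eg g1 by (auto simp: \<rho>_def)
    have rhom: "\<rho> ^ m \<le> g"
    proof -
      have "\<rho> \<le> exp (-e/2)" unfolding \<rho>_def using exp_ge_add_one_self[of "-e/2"] by simp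
      then have "\<rho> ^ m \<le> exp (-e/2) ^ m" using rho0 by (intro power_mono) auto
      also have "\<dots> = exp (- (e * real m) / 2)" by (simp add: exp_of_nat_mult[symmetric] algebra_simps)
      also have "\<dots> \<le> exp (-(real T powr (-2/3)) * (real T/200 - 1) / 2)"
      proof -
        have "real T powr (-2/3) * (real T/200 - 1) \<le> real T powr (-2/3) * real m"
          using mT by (intro mult_left_mono) auto
        also have "\<dots> \<le> e * real m" using eT by (intro mult_right_mono) auto
        finally show ?thesis by simp
      qed
      also have "\<dots> \<le> 4 * real T powr (-2/3)" using X0[OF TX] .
      also have "\<dots> \<le> g" using eT eg by linarith
      finally show ?thesis .
    qed
    define w where "w = (\<lambda>s::nat. if m + 1 \<le> s \<and> s \<le> T1' then (1::real) else 0)"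
    have M: "wsu_E 2 e g (two_phase T) T 1 (\<lambda>i. 1/2) \<ge>
       (\<Sum>k<T. w (1+k) * (3/(8*g) - (1-e/2)^k * (1/2) /(4*g^2)))"
      by (rule main[OF vp, where w=w and p="\<lambda>i. 1/2" and t=1 and n=T]) (auto simp: w_def T1'_def)
    have trm: "w (1+k) * (3/(8*g) - (1-e/2)^k * (1/2) /(4*g^2)) \<ge> (if k \<in> {m..<T1'} then 1/(4*g) else 0)"
      if "k < T" for k
    proof (cases "k \<in> {m..<T1'}")
      case True
      then have wk: "w (1+k) = 1" by (auto simp: w_def)
      have "\<rho> ^ k \<le> \<rho> ^ m" using True rho0 rho1 by (intro power_decreasing) auto
      then have "\<rho> ^ k \<le> g" using rhom by linarith
      then have "\<rho> ^ k * (1/2) / (4*g^2) \<le> g * (1/2) / (4*g^2)"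
        using g0 by (intro divide_right_mono mult_right_mono) auto
      also have "g * (1/2) / (4*g^2) = 1/(8*g)" using g0 by (simp add: field_simps power2_eq_square)
      finally have "3/(8*g) - \<rho> ^ k * (1/2) /(4*g^2) \<ge> 1/(4*g)" by (simp add: field_simps)
      then show ?thesis using True wk by (simp add: \<rho>_def)
    next
      case False
      then have wk: "w (1+k) = 0" by (auto simp: w_def)
      then show ?thesis using False by auto
    qed
    have "(\<Sum>k<T. w (1+k) * (3/(8*g) - (1-e/2)^k * (1/2) /(4*g^2)))
        \<ge> (\<Sum>k<T. (if k \<in> {m..<T1'} then 1/(4*g) else 0))"
      by (rule sum_mono) (use trm in auto)
    also have "(\<Sum>k<T. (if k \<in> {m..<T1'} then 1/(4*g) else 0)) = (\<Sum>k\<in>{..<T} \<inter> {m..<T1'}. 1/(4*g))"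
      by (rule sum.inter_restrict[symmetric]) simp
    also have "{..<T} \<inter> {m..<T1'} = {m..<T1'}" using T1le by auto
    also have "(\<Sum>k\<in>{m..<T1'}. 1/(4*g)) = real (T1' - m) / (4*g)" by simp
    finally have L: "wsu_E 2 e g (two_phase T) T 1 (\<lambda>i. 1/2) \<ge> real (T1' - m) / (4*g)" using M by linarith
    have "(1/1600) * (real T * 2 / g) = (real T / 200) / (4*g)" by (simp add: field_simps)
    also have "\<dots> \<le> real (T1' - m) / (4*g)" using cnt g0 by (intro divide_right_mono) auto
    finally show "wsu_expected_sq 2 (\<eta> T) (\<gamma> T) (two_phase T) T \<ge> (1/1600) * (real T * 2 / \<gamma> T)"
      using L by (simp add: wsu_expected_sq_def e_def g_def)
  qed
qed

end
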